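(* Let $G$ be a finite group and let $p$ be a fixed prime divisor of $|G|$. Suppose that every maximal subgroup of $G$ is normal in $G$ or has order not divisible by $p$. Then for each prime divisor $q$ of $|G|$, $G$ is $q$-nilpotent or $q$-closed.
   Context: For a prime $q$, a finite group $G$ is $q$-nilpotent if it has a normal $q$-complement (a normal subgroup of order coprime to $q$ and index a power of $q$), and $q$-closed if its Sylow $q$-subgroup is normal in $G$. *)

theory Defs
  imports "HOL-Algebra.Algebra"
begin

definition maximal_subgroup :: "'a set \<Rightarrow> ('a, 'b) monoid_scheme \<Rightarrow> bool" where
  "maximal_subgroup M G \<longleftrightarrow> subgroup M G \<and> M \<noteq> carrier G \<and>
     (\<forall>H. subgroup H G \<and> M \<subseteq> H \<longrightarrow> H = M \<or> H = carrier G)"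

definition q_nilpotent :: "nat \<Rightarrow> ('a, 'b) monoid_scheme \<Rightarrow> bool" where
  "q_nilpotent q G \<longleftrightarrow> (\<exists>N. N \<lhd> G \<and> coprime (card N) q \<and>
     (\<exists>k. card (carrier G) = card N * q ^ k))"

definition q_closed :: "nat \<Rightarrow> ('a, 'b) monoid_scheme \<Rightarrow> bool" where
  "q_closed q G \<longleftrightarrow> (\<exists>P. subgroup P G \<and>
     card P = q ^ multiplicity q (card (carrier G)) \<and> P \<lhd> G)"

end

theory Submission
  imports Defs
begin

context group begin

lemma card_subgroup_dvd:
  assumes "subgroup H G" "subgroup K G" "H \<subseteq> K"
  shows "card H dvd card K"
proof -
  have "subgroup H (G\<lparr>carrier := K\<rparr>)" using subgroup_incl assms by blast
  moreover have "group (G\<lparr>carrier := K\<rparr>)" using subgroup_imp_group assms(2) by blast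
  ultimately have "card (rcosets\<^bsub>G\<lparr>carrier := K\<rparr>\<^esub> H) * card H = order (G\<lparr>carrier := K\<rparr>)"
    using group.lagrange by blast
  then have "card K = card (rcosets\<^bsub>G\<lparr>carrier := K\<rparr>\<^esub> H) * card H"
    by (simp add: order_def)
  then show ?thesis by simp
qed

definition cnj :: "'a \<Rightarrow> 'a set \<Rightarrow> 'a set" where
  "cnj g S = (\<lambda>x. g \<otimes> x \<otimes> inv g) ` S"

definition nrm :: "'a set \<Rightarrow> 'a set" where
  "nrm W = {g \<in> carrier G. cnj g W = W}"

lemma cnj_comp:
  assumes "g \<in> carrier G" "h \<in> carrier G" "S \<subseteq> carrier G"
  shows "cnj h (cnj g S) = cnj (h \<otimes> g) S"
  unfolding cnj_def image_image
proof (rule image_cong[OF refl])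
  fix x assume "x \<in> S"
  then have x: "x \<in> carrier G" using assms by auto
  show "h \<otimes> (g \<otimes> x \<otimes> inv g) \<otimes> inv h = h \<otimes> g \<otimes> x \<otimes> inv (h \<otimes> g)"
    using assms x by (simp add: inv_mult_group m_assoc)
qed

lemma cnj_one: "S \<subseteq> carrier G \<Longrightarrow> cnj \<one> S = S"
  unfolding cnj_def by (auto simp: image_iff) (metis r_one subsetD l_one)+

lemma cnj_subset: "g \<in> carrier G \<Longrightarrow> S \<subseteq> carrier G \<Longrightarrow> cnj g S \<subseteq> carrier G"
  unfolding cnj_def by auto

lemma cnj_inv:
  assumes "g \<in> carrier G" "S \<subseteq> carrier G"
  shows "cnj (inv g) (cnj g S) = S"
  using assms by (simp add: cnj_comp cnj_one)

lemma card_cnj: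
  assumes "g \<in> carrier G" "S \<subseteq> carrier G"
  shows "card (cnj g S) = card S"
proof -
  have "inj_on (\<lambda>x. g \<otimes> x \<otimes> inv g) S"
  proof (rule inj_onI)
    fix x y assume "x \<in> S" "y \<in> S" "g \<otimes> x \<otimes> inv g = g \<otimes> y \<otimes> inv g"
    then show "x = y" using assms
      by (metis (no_types, lifting) inv_closed l_cancel m_closed r_cancel subsetD)
  qed
  then show ?thesis unfolding cnj_def by (rule card_image)
qed

lemma cnj_subgroup:
  assumes "g \<in> carrier G" "subgroup S G"
  shows "subgroup (cnj g S) G"
proof (rule subgroupI)
  have sub: "S \<subseteq> carrier G" using assms subgroup.subset by blast
  show "cnj g S \<subseteq> carrier G" using cnj_subset assms sub by blast
  show "cnj g S \<noteq> {}" using subgroup.one_closed[OF assms(2)] unfolding cnj_def by blast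
  fix a b assume a: "a \<in> cnj g S" and b: "b \<in> cnj g S"
  then obtain x y where xy: "x \<in> S" "y \<in> S" "a = g \<otimes> x \<otimes> inv g" "b = g \<otimes> y \<otimes> inv g"
    unfolding cnj_def by blast
  have xc: "x \<in> carrier G" "y \<in> carrier G" using xy sub by auto
  have "inv a = g \<otimes> inv x \<otimes> inv g" using xy xc assms by (simp add: inv_mult_group m_assoc)
  moreover have "inv x \<in> S" by (rule subgroup.m_inv_closed[OF assms(2) xy(1)])
  ultimately show "inv a \<in> cnj g S" unfolding cnj_def by blast
  have "a \<otimes> b = g \<otimes> (x \<otimes> y) \<otimes> inv g" using xy xc assms
    by (simp add: m_assoc) (simp add: m_assoc[symmetric])
  moreover have "x \<otimes> y \<in> S" by (rule subgroup.m_closed[OF assms(2) xy(1,2)])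
  ultimately show "a \<otimes> b \<in> cnj g S" unfolding cnj_def by blast
qed

lemma cnj_self:
  assumes "subgroup W G" "x \<in> W"
  shows "cnj x W = W"
proof -
  have sub: "W \<subseteq> carrier G" using assms subgroup.subset by blast
  have xc: "x \<in> carrier G" using assms sub by auto
  have 1: "cnj y W \<subseteq> W" if "y \<in> W" for y
    unfolding cnj_def using that assms by (auto intro!: subgroup.m_closed subgroup.m_inv_closed)
  have "cnj (inv x) W \<subseteq> W" by (rule 1) (rule subgroup.m_inv_closed[OF assms(1,2)])
  then have "cnj x (cnj (inv x) W) \<subseteq> cnj x W" unfolding cnj_def by blast
  moreover have "cnj x (cnj (inv x) W) = W" using cnj_inv[of "inv x" W] xc sub by simp
  ultimately show ?thesis using 1 assms by blast
qed

lemma nrm_subgroup: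
  assumes "W \<subseteq> carrier G"
  shows "subgroup (nrm W) G"
proof (rule subgroupI)
  show "nrm W \<subseteq> carrier G" unfolding nrm_def by blast
  show "nrm W \<noteq> {}" unfolding nrm_def using cnj_one assms by blast
  fix a b assume a: "a \<in> nrm W" and b: "b \<in> nrm W"
  then show "inv a \<in> nrm W" unfolding nrm_def using cnj_inv assms
    by (metis (mono_tags, lifting) inv_closed mem_Collect_eq)
  show "a \<otimes> b \<in> nrm W" using a b unfolding nrm_def using cnj_comp assms
    by (metis (mono_tags, lifting) m_closed mem_Collect_eq)
qed

lemma subset_nrm: "subgroup W G \<Longrightarrow> W \<subseteq> nrm W"
  unfolding nrm_def using cnj_self subgroup.subset by blast

lemma nrm_normal:
  assumes "subgroup W G" "nrm W = carrier G"
  shows "W \<lhd> G"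
proof (rule normal_invI[OF assms(1)])
  fix x h assume "x \<in> carrier G" "h \<in> W"
  then have "x \<otimes> h \<otimes> inv x \<in> cnj x W" unfolding cnj_def by blast
  then show "x \<otimes> h \<otimes> inv x \<in> W" using assms \<open>x \<in> carrier G\<close> unfolding nrm_def by blast
qed

lemma normal_cnj:
  assumes "W \<lhd> G" "g \<in> carrier G"
  shows "cnj g W = W"
proof -
  have 1: "cnj y W \<subseteq> W" if "y \<in> carrier G" for y
    unfolding cnj_def using that assms normal_invE by blast
  have "cnj g (cnj (inv g) W) \<subseteq> cnj g W" using 1[of "inv g"] assms unfolding cnj_def by blast
  moreover have "cnj g (cnj (inv g) W) = W" using cnj_inv[of "inv g" W] assms
    normal_imp_subgroup subgroup.subset by force
  ultimately show ?thesis using 1 assms by blast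
qed

lemma cnj_set_mult:
  assumes "g \<in> carrier G" "A \<subseteq> carrier G" "B \<subseteq> carrier G"
  shows "cnj g (A <#> B) = cnj g A <#> cnj g B"
proof -
  have e: "g \<otimes> (a \<otimes> b) \<otimes> inv g = (g \<otimes> a \<otimes> inv g) \<otimes> (g \<otimes> b \<otimes> inv g)"
    if "a \<in> carrier G" "b \<in> carrier G" for a b
    using that assms by (simp add: m_assoc) (simp add: m_assoc[symmetric])
  show ?thesis
  proof
    show "cnj g (A <#> B) \<subseteq> cnj g A <#> cnj g B"
    proof
      fix y assume "y \<in> cnj g (A <#> B)"
      then obtain a b where ab: "a \<in> A" "b \<in> B" "y = g \<otimes> (a \<otimes> b) \<otimes> inv g"
        unfolding cnj_def set_mult_def by blast
      moreover have "a \<in> carrier G" "b \<in> carrier G" using ab assms by auto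
      ultimately have "y = (g \<otimes> a \<otimes> inv g) \<otimes> (g \<otimes> b \<otimes> inv g)" using e by simp
      then show "y \<in> cnj g A <#> cnj g B" using ab unfolding cnj_def set_mult_def by blast
    qed
    show "cnj g A <#> cnj g B \<subseteq> cnj g (A <#> B)"
    proof
      fix y assume "y \<in> cnj g A <#> cnj g B"
      then obtain a b where ab: "a \<in> A" "b \<in> B" "y = (g \<otimes> a \<otimes> inv g) \<otimes> (g \<otimes> b \<otimes> inv g)"
        unfolding cnj_def set_mult_def by blast
      moreover have "a \<in> carrier G" "b \<in> carrier G" using ab assms by auto
      ultimately have "y = g \<otimes> (a \<otimes> b) \<otimes> inv g" using e by simp
      then show "y \<in> cnj g (A <#> B)" using ab unfolding cnj_def set_mult_def by blast
    qed
  qed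
qed

lemma exists_maximal:
  assumes "finite (carrier G)" "subgroup H G" "H \<noteq> carrier G"
  shows "\<exists>M. maximal_subgroup M G \<and> H \<subseteq> M"
proof -
  let ?S = "{K. subgroup K G \<and> H \<subseteq> K \<and> K \<noteq> carrier G}"
  have "finite ?S"
    by (rule finite_subset[of _ "Pow (carrier G)"]) (use assms subgroup.subset in auto)
  moreover have "?S \<noteq> {}" using assms by blast
  ultimately have "\<exists>M\<in>?S. \<forall>b\<in>?S. M \<le> b \<longrightarrow> M = b"
    by (rule finite_has_maximal)
  then obtain M where M: "M \<in> ?S" "\<forall>b\<in>?S. M \<le> b \<longrightarrow> M = b"
    by (elim bexE) simp
  have "maximal_subgroup M G" unfolding maximal_subgroup_def
  proof (intro conjI allI impI)
    fix K assume K: "subgroup K G \<and> M \<subseteq> K"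
    show "K = M \<or> K = carrier G"
    proof (cases "K = carrier G")
      case False
      then have "K \<in> ?S" using K M(1) by blast
      then show ?thesis using M(2) K by blast
    qed simp
  qed (use M(1) in auto)
  then show ?thesis using M by blast
qed

lemma sylow_exists:
  assumes "finite (carrier G)" "Factorial_Ring.prime r"
  shows "\<exists>R. subgroup R G \<and> card R = r ^ multiplicity r (order G)"
proof -
  have "order G = r ^ multiplicity r (order G) * (order G div r ^ multiplicity r (order G))"
    by (simp add: multiplicity_dvd)
  then show ?thesis using sylow_thm[OF assms(2) is_group _ assms(1)] by blast
qed

lemma card_set_mult:
  assumes "finite (carrier G)" "N \<lhd> G" "subgroup H G"
  shows "card (N <#> H) * card (N \<inter> H) = card N * card H"
proof -
  let ?G1 = "G\<lparr>carrier := N <#> H\<rparr>" and ?G2 = "G\<lparr>carrier := H\<rparr>"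
  have g1: "group ?G1" using subgroup_imp_group assms mult_norm_subgroup by simp
  have g2: "group ?G2" using subgroup_imp_group assms by simp
  have n1: "N \<lhd> ?G1" using normal_in_normal_set_mult assms by blast
  have s2: "subgroup (N \<inter> H) ?G2"
    using normal_Int_subgroup assms normal_imp_subgroup by blast
  have iso: "?G1 Mod N \<cong> ?G2 Mod (N \<inter> H)" using weak_snd_iso_thme assms by blast
  have c: "card (carrier (?G1 Mod N)) = card (carrier (?G2 Mod (N \<inter> H)))"
    using iso_same_card[OF iso] .
  have l1: "card (rcosets\<^bsub>?G1\<^esub> N) * card N = card (N <#> H)"
    using group.lagrange[OF g1 normal_imp_subgroup[OF n1]] by (simp add: order_def)
  have l2: "card (rcosets\<^bsub>?G2\<^esub> (N \<inter> H)) * card (N \<inter> H) = card H"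
    using group.lagrange[OF g2 s2] by (simp add: order_def)
  have eq: "card (rcosets\<^bsub>?G1\<^esub> N) = card (rcosets\<^bsub>?G2\<^esub> (N \<inter> H))"
    using c by (simp add: FactGroup_def)
  show ?thesis
    unfolding l1[symmetric] l2[symmetric] eq by (simp add: ac_simps)
qed

end

context group begin

lemma fixed_coset:
  assumes fin: "finite (carrier G)" and r: "Factorial_Ring.prime r"
    and P: "subgroup P G" and nd: "\<not> r dvd card (rcosets P)"
    and Q: "subgroup Q G" and cQ: "card Q = r ^ b"
  shows "\<exists>C \<in> rcosets P. \<forall>x\<in>Q. C #> x = C"
proof -
  let ?E = "rcosets P"
  let ?Q = "G\<lparr>carrier := Q\<rparr>"
  define \<phi> where "\<phi> = (\<lambda>x. \<lambda>C\<in>?E. C #> inv x)"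
  have Psub: "P \<subseteq> carrier G" using P subgroup.subset by blast
  have Csub: "C \<subseteq> carrier G" if "C \<in> ?E" for C
    using rcosets_subset_PowG[OF P] that by auto
  have closed: "C #> y \<in> ?E" if "C \<in> ?E" "y \<in> carrier G" for C y
  proof -
    have "C \<in> (\<Union>a\<in>carrier G. {P #> a})" using that(1) by (simp add: RCOSETS_def)
    then obtain a where a: "a \<in> carrier G" "C = P #> a" by blast
    then have "C #> y = P #> (a \<otimes> y)" using coset_mult_assoc Psub that by simp
    then show ?thesis using rcosetsI Psub a that by simp
  qed
  have bka: "(C #> y) #> inv y = C" if "C \<in> ?E" "y \<in> carrier G" for C y
    using that Csub coset_mult_assoc by simp
  have bkb: "(C #> inv y) #> y = C" if "C \<in> ?E" "y \<in> carrier G" for C y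
    using that Csub coset_mult_assoc by simp
  have bij: "\<phi> x \<in> Bij ?E" if "x \<in> carrier G" for x
  proof -
    have "bij_betw (\<lambda>C. C #> inv x) ?E ?E"
      by (rule bij_betwI[where g = "\<lambda>C. C #> x"]) (use closed bka bkb that in auto)
    then have "bij_betw (\<phi> x) ?E ?E" unfolding \<phi>_def by (rule bij_betw_cong[THEN iffD1, rotated]) auto
    then show ?thesis unfolding Bij_def \<phi>_def by simp
  qed
  have gQ: "group ?Q" using subgroup_imp_group Q by blast
  have hom: "\<phi> \<in> hom ?Q (BijGroup ?E)"
  proof (rule homI)
    fix x assume "x \<in> carrier ?Q"
    then have "x \<in> carrier G" using subsetD[OF subgroup.subset[OF Q]] by simp
    then show "\<phi> x \<in> carrier (BijGroup ?E)" using bij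
      unfolding BijGroup_def by simp
  next
    fix x y assume xy: "x \<in> carrier ?Q" "y \<in> carrier ?Q"
    then have xyc: "x \<in> carrier G" "y \<in> carrier G" using subsetD[OF subgroup.subset[OF Q]] by auto
    have "\<phi> (x \<otimes> y) = compose ?E (\<phi> x) (\<phi> y)"
    proof
      fix C show "\<phi> (x \<otimes> y) C = compose ?E (\<phi> x) (\<phi> y) C"
        using xyc closed Csub by (auto simp: \<phi>_def compose_def coset_mult_assoc inv_mult_group)
    qed
    then show "\<phi> (x \<otimes>\<^bsub>?Q\<^esub> y) = \<phi> x \<otimes>\<^bsub>BijGroup ?E\<^esub> \<phi> y"
      using bij xyc unfolding BijGroup_def by simp
  qed
  interpret A: group_action ?Q ?E \<phi>
    unfolding group_action_def group_hom_def group_hom_axioms_def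
    using gQ group_BijGroup hom by blast
  have finE: "finite ?E"
    using rcosets_subset_PowG[OF P] fin by (meson finite_Pow_iff finite_subset)
  show ?thesis
  proof (rule ccontr)
    assume nfix: "\<not> ?thesis"
    have "r dvd card orb" if orb: "orb \<in> orbits ?Q ?E \<phi>" for orb
    proof -
      obtain C where C: "C \<in> ?E" "orb = orbit ?Q \<phi> C" using orb unfolding orbits_def by blast
      have "card (orbit ?Q \<phi> C) * card (stabilizer ?Q \<phi> C) = r ^ b"
        using A.orbit_stabilizer_theorem[OF C(1)] cQ by (simp add: order_def)
      then have "card orb dvd r ^ b" using C by (metis dvd_triv_left)
      then obtain j where j: "j \<le> b" "card orb = r ^ j" using r by (auto simp: divides_primepow_nat)
      have "j \<noteq> 0"
      proof
        assume "j = 0"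
        then have c1: "card orb = 1" using j by simp
        have "C \<in> orb" using C A.orbit_refl by blast
        then have orbC: "orb = {C}" using c1 by (metis card_1_singletonE singletonD)
        obtain x where x: "x \<in> Q" "C #> x \<noteq> C" using nfix C(1) by blast
        have ix: "inv x \<in> Q" by (rule subgroup.m_inv_closed[OF Q x(1)])
        have xc: "x \<in> carrier G" by (rule subsetD[OF subgroup.subset[OF Q] x(1)])
        have "\<phi> (inv x) C \<in> orb" using C ix unfolding orbit_def by auto
        then have "\<phi> (inv x) C = C" using orbC by blast
        moreover have "\<phi> (inv x) C = C #> x" using C(1) xc unfolding \<phi>_def by simp
        ultimately show False using x by simp
      qed
      then show ?thesis using j r by simp
    qed
    moreover have "card ?E = (\<Sum>orb\<in>orbits ?Q ?E \<phi>. card orb)"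
      using A.disjoint_sum[OF finE, of "\<lambda>_. 1::nat"] by simp
    ultimately have "r dvd card ?E" by (simp add: dvd_sum)
    then show False using nd by contradiction
  qed
qed

end

lemma prime_power_only:
  fixes m q :: nat
  assumes "m > 0" "Factorial_Ring.prime q" "\<And>r. Factorial_Ring.prime r \<Longrightarrow> r dvd m \<Longrightarrow> r = q"
  shows "m = q ^ multiplicity q m"
proof -
  have sub: "prime_factors m \<subseteq> {q}" using assms by (auto simp: in_prime_factors_iff)
  have m: "m = (\<Prod>p\<in>prime_factors m. p ^ multiplicity p m)"
    using prime_factorization_nat assms(1) by blast
  show ?thesis
  proof (cases "q \<in> prime_factors m")
    case True
    then have "prime_factors m = {q}" using sub by blast
    then show ?thesis using m by simp
  next
    case False
    then have "prime_factors m = {}" using sub by blast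
    then have "m = 1" using m by simp
    then show ?thesis by simp
  qed
qed

context group begin

lemma cnj_consistent:
  assumes "subgroup M G" "h \<in> M"
  shows "group.cnj (G\<lparr>carrier := M\<rparr>) h S = cnj h S"
proof -
  have "group (G\<lparr>carrier := M\<rparr>)" using subgroup_imp_group assms by blast
  then show ?thesis
    unfolding group.cnj_def[OF \<open>group (G\<lparr>carrier := M\<rparr>)\<close>] cnj_def using assms by simp
qed

lemma cnj_mono: "S \<subseteq> T \<Longrightarrow> cnj g S \<subseteq> cnj g T"
  unfolding cnj_def by blast

end

context group begin

lemma sylow_conj:
  assumes fin: "finite (carrier G)" and r: "Factorial_Ring.prime r"
    and P: "subgroup P G" "card P = r ^ multiplicity r (order G)"
    and Q: "subgroup Q G" "card Q = card P"
  shows "\<exists>g\<in>carrier G. cnj g Q = P"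
proof -
  let ?a = "multiplicity r (order G)"
  have pos: "order G > 0" using fin by (simp add: order_gt_0_iff_finite)
  have lag: "card (rcosets P) * r ^ ?a = order G" using lagrange[OF P(1)] P(2) by simp
  have nd: "\<not> r dvd card (rcosets P)"
  proof
    assume "r dvd card (rcosets P)"
    then have "r * r ^ ?a dvd card (rcosets P) * r ^ ?a" by (rule mult_dvd_mono) simp
    then have "r ^ Suc ?a dvd order G" using lag by simp
    then have "Suc ?a \<le> ?a" using multiplicity_geI[of "order G" r "Suc ?a"] pos prime_gt_1_nat[OF r]
      by simp
    then show False by simp
  qed
  obtain C where C: "C \<in> rcosets P" "\<forall>x\<in>Q. C #> x = C"
    using fixed_coset[OF fin r P(1) nd Q(1), of "multiplicity r (order G)"] Q(2) P(2) by auto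
  have "C \<in> (\<Union>a\<in>carrier G. {P #> a})" using C(1) by (simp add: RCOSETS_def)
  then obtain g where g: "g \<in> carrier G" "C = P #> g" by blast
  have Psub: "P \<subseteq> carrier G" by (rule subgroup.subset[OF P(1)])
  have Qsub: "Q \<subseteq> carrier G" by (rule subgroup.subset[OF Q(1)])
  have "cnj g Q \<subseteq> P"
  proof
    fix z assume "z \<in> cnj g Q"
    then obtain x where x: "x \<in> Q" "z = g \<otimes> x \<otimes> inv g" unfolding cnj_def by blast
    have xc: "x \<in> carrier G" using x Qsub by blast
    have "P #> g #> x = P #> g" using C(2) x g by simp
    then have "P #> (g \<otimes> x) = P #> g" using coset_mult_assoc Psub g xc by simp
    moreover have "g \<otimes> x \<in> P #> (g \<otimes> x)" using rcos_self[OF _ P(1)] g xc by simp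
    ultimately have "g \<otimes> x \<in> P #> g" by simp
    then have "g \<otimes> x \<otimes> inv g \<in> P"
      using subgroup.rcos_module_imp[OF P(1) is_group g(1)] by blast
    then show "z \<in> P" using x by simp
  qed
  moreover have "card (cnj g Q) = card P" using card_cnj g Qsub Q(2) by simp
  moreover have "finite P" using fin Psub finite_subset by blast
  ultimately have "cnj g Q = P" using card_subset_eq by blast
  then show ?thesis using g by blast
qed

end

context group begin

lemma normal_crit:
  assumes fin: "finite (carrier G)" and p: "Factorial_Ring.prime p" and pd: "p dvd order G"
    and hyp: "\<And>M. maximal_subgroup M G \<Longrightarrow> M \<lhd> G \<or> \<not> p dvd card M"
    and P: "subgroup P G" "card P = p ^ multiplicity p (order G)"
    and W: "subgroup W G" "P \<subseteq> W"
    and r: "Factorial_Ring.prime r"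
    and R: "subgroup R G" "card R = r ^ multiplicity r (order G)" "R \<subseteq> W"
    and nr: "\<And>g. g \<in> carrier G \<Longrightarrow> cnj g R = R \<Longrightarrow> cnj g W = W"
  shows "W \<lhd> G"
proof (rule ccontr)
  assume nn: "\<not> W \<lhd> G"
  have Wsub: "W \<subseteq> carrier G" by (rule subgroup.subset[OF W(1)])
  have Rsub: "R \<subseteq> carrier G" by (rule subgroup.subset[OF R(1)])
  have ns: "subgroup (nrm W) G" by (rule nrm_subgroup[OF Wsub])
  have "nrm W \<noteq> carrier G" using nrm_normal[OF W(1)] nn by blast
  then obtain M where M: "maximal_subgroup M G" "nrm W \<subseteq> M"
    using exists_maximal[OF fin ns] by blast
  have Ms: "subgroup M G" "M \<noteq> carrier G" using M(1) unfolding maximal_subgroup_def by auto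
  have WM: "W \<subseteq> M" using subset_nrm[OF W(1)] M(2) by blast
  have pos: "order G > 0" using fin by (simp add: order_gt_0_iff_finite)
  have "1 \<le> multiplicity p (order G)"
    using multiplicity_geI[of "order G" p 1] pos pd prime_gt_1_nat[OF p] by simp
  then have "p dvd card P" using P(2) by (simp add: dvd_power)
  moreover have "card P dvd card M" using card_subgroup_dvd[OF P(1) Ms(1)] W(2) WM by blast
  ultimately have "p dvd card M" by (rule dvd_trans)
  then have Mn: "M \<lhd> G" using hyp[OF M(1)] by blast
  have cMG: "card M dvd order G"
    using card_subgroup_dvd[OF Ms(1) subgroup_self] subgroup.subset[OF Ms(1)] by (simp add: order_def)
  have cM0: "card M \<noteq> 0" using cMG pos by auto
  have RdM: "card R dvd card M" using card_subgroup_dvd[OF R(1) Ms(1)] R(3) WM by blast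
  have m1: "multiplicity r (order G) \<le> multiplicity r (card M)"
    using multiplicity_geI[of "card M" r "multiplicity r (order G)"] cM0 RdM R(2) prime_gt_1_nat[OF r]
    by simp
  have m2: "multiplicity r (card M) \<le> multiplicity r (order G)"
    using dvd_imp_multiplicity_le[OF cMG] pos by simp
  let ?M = "G\<lparr>carrier := M\<rparr>"
  have gM: "group ?M" using subgroup_imp_group[OF Ms(1)] .
  have "finite M" by (rule finite_subset[OF subgroup.subset[OF Ms(1)] fin])
  then have finM: "finite (carrier ?M)" by simp
  have oM: "order ?M = card M" by (simp add: order_def)
  have RsM: "subgroup R ?M" using subgroup_incl[OF R(1) Ms(1)] R(3) WM by blast
  have RcM: "card R = r ^ multiplicity r (order ?M)" using R(2) m1 m2 oM by simp
  have "carrier G \<subseteq> M"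
  proof
    fix g assume g: "g \<in> carrier G"
    let ?R' = "cnj g R"
    have R'G: "subgroup ?R' G" by (rule cnj_subgroup[OF g R(1)])
    have "?R' \<subseteq> cnj g M" using cnj_mono R(3) WM by blast
    also have "cnj g M = M" by (rule normal_cnj[OF Mn g])
    finally have R'M: "?R' \<subseteq> M" .
    have R'sM: "subgroup ?R' ?M" using subgroup_incl[OF R'G Ms(1) R'M] .
    have cR': "card ?R' = card R" by (rule card_cnj[OF g Rsub])
    obtain h where h: "h \<in> carrier ?M" "group.cnj ?M h ?R' = R"
      using group.sylow_conj[OF gM finM r RsM RcM R'sM cR'] by blast
    have hM: "h \<in> M" using h(1) by simp
    have hc: "h \<in> carrier G" by (rule subsetD[OF subgroup.subset[OF Ms(1)] hM])
    have "cnj h ?R' = R" using h(2) cnj_consistent[OF Ms(1) hM] by simp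
    then have "cnj (h \<otimes> g) R = R" using cnj_comp[OF g hc Rsub] by simp
    then have "cnj (h \<otimes> g) W = W" using nr hc g by simp
    then have "h \<otimes> g \<in> nrm W" unfolding nrm_def using hc g by simp
    then have hg: "h \<otimes> g \<in> M" using M(2) by blast
    have "inv h \<in> M" by (rule subgroup.m_inv_closed[OF Ms(1) hM])
    then have "inv h \<otimes> (h \<otimes> g) \<in> M" using hg subgroup.m_closed[OF Ms(1)] by blast
    then show "g \<in> M" using hc g by (simp add: m_assoc[symmetric])
  qed
  then show False using Ms(2) subgroup.subset[OF Ms(1)] by blast
qed

end

context group begin

lemma main_q:
  assumes fin: "finite (carrier G)" and p: "Factorial_Ring.prime p" and pd: "p dvd order G"
    and hyp: "\<And>M. maximal_subgroup M G \<Longrightarrow> M \<lhd> G \<or> \<not> p dvd card M"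
    and q1: "Factorial_Ring.prime q"
  shows "q_nilpotent q G \<or> q_closed q G"
proof -
  have pos: "order G > 0" using fin by (simp add: order_gt_0_iff_finite)
  obtain P where P: "subgroup P G" "card P = p ^ multiplicity p (order G)"
    using sylow_exists[OF fin p] by blast
  have Psub: "P \<subseteq> carrier G" by (rule subgroup.subset[OF P(1)])
  have Pn: "P \<lhd> G"
    by (rule normal_crit[OF fin p pd hyp P P(1) subset_refl p P subset_refl]) simp
  show ?thesis
  proof (cases "q = p")
    case True
    then have "q_closed q G" unfolding q_closed_def using P Pn by (auto simp: order_def)
    then show ?thesis ..
  next
    case False
    have PR_sub: "subgroup (P <#> R) G" if "subgroup R G" for R
      by (rule mult_norm_subgroup[OF Pn that])
    have sub1: "A \<subseteq> A <#> B" if "A \<subseteq> carrier G" "\<one> \<in> B" for A B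
    proof
      fix x assume x: "x \<in> A"
      then have "x = x \<otimes> \<one>" using that by auto
      then show "x \<in> A <#> B" using x that unfolding set_mult_def by blast
    qed
    have sub2: "B \<subseteq> A <#> B" if "B \<subseteq> carrier G" "\<one> \<in> A" for A B
    proof
      fix x assume x: "x \<in> B"
      then have "x = \<one> \<otimes> x" using that by auto
      then show "x \<in> A <#> B" using x that unfolding set_mult_def by blast
    qed
    have PR: "P <#> R \<lhd> G"
      if r: "Factorial_Ring.prime r" and R: "subgroup R G" "card R = r ^ multiplicity r (order G)" for r R
    proof -
      have Rsub: "R \<subseteq> carrier G" by (rule subgroup.subset[OF R(1)])
      have "P \<subseteq> P <#> R" by (rule sub1[OF Psub subgroup.one_closed[OF R(1)]])
      moreover have "R \<subseteq> P <#> R" by (rule sub2[OF Rsub subgroup.one_closed[OF P(1)]])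
      ultimately show ?thesis
      proof (intro normal_crit[OF fin p pd hyp P PR_sub[OF R(1)] _ r R])
        fix g assume g: "g \<in> carrier G" "cnj g R = R"
        show "cnj g (P <#> R) = P <#> R"
          using cnj_set_mult[OF g(1) Psub Rsub] normal_cnj[OF Pn g(1)] g(2) by simp
      qed
    qed
    define F where "F = {N. N \<lhd> G \<and> coprime (card N) q}"
    have "F \<subseteq> Pow (carrier G)"
      unfolding F_def using normal_imp_subgroup subgroup.subset by blast
    then have finF: "finite F" using fin by (meson finite_Pow_iff finite_subset)
    have "{\<one>} \<in> F" unfolding F_def using one_is_normal by simp
    then have "F \<noteq> {}" by blast
    have "\<exists>K\<in>F. \<forall>b\<in>F. K \<le> b \<longrightarrow> K = b" by (rule finite_has_maximal[OF finF \<open>F \<noteq> {}\<close>])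
    then obtain K where K: "K \<in> F" "\<forall>b\<in>F. K \<le> b \<longrightarrow> K = b" by (elim bexE) simp
    have Kn: "K \<lhd> G" and Kc: "coprime (card K) q" using K(1) unfolding F_def by auto
    have Ksub: "subgroup K G" by (rule normal_imp_subgroup[OF Kn])
    have Kcar: "K \<subseteq> carrier G" by (rule subgroup.subset[OF Ksub])
    have absorb: "L \<subseteq> K" if L: "L \<lhd> G" "coprime (card L) q" for L
    proof -
      have Ls: "subgroup L G" by (rule normal_imp_subgroup[OF L(1)])
      have KLn: "K <#> L \<lhd> G" by (rule normal_subgroup_set_mult_closed[OF Kn L(1)])
      have "card (K <#> L) * card (K \<inter> L) = card K * card L"
        by (rule card_set_mult[OF fin Kn Ls])
      then have d: "card (K <#> L) dvd card K * card L" by (metis dvd_triv_left)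
      have c: "coprime (card K * card L) q" using Kc L(2) by simp
      have "coprime (card (K <#> L)) q" by (rule coprime_divisors[OF d dvd_refl c])
      then have KLF: "K <#> L \<in> F" using KLn unfolding F_def by simp
      have "K \<subseteq> K <#> L" by (rule sub1[OF Kcar subgroup.one_closed[OF Ls]])
      then have "K = K <#> L" using K(2) KLF by blast
      moreover have "L \<subseteq> K <#> L" by (rule sub2[OF subgroup.subset[OF Ls] subgroup.one_closed[OF Ksub]])
      ultimately show ?thesis by blast
    qed
    have Rdvd: "r ^ multiplicity r (order G) dvd card K" if r: "Factorial_Ring.prime r" "r \<noteq> q" for r
    proof -
      obtain R where R: "subgroup R G" "card R = r ^ multiplicity r (order G)"
        using sylow_exists[OF fin r(1)] by blast
      have n: "P <#> R \<lhd> G" by (rule PR[OF r(1) R])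
      have "card (P <#> R) * card (P \<inter> R) = card P * card R" by (rule card_set_mult[OF fin Pn R(1)])
      then have d: "card (P <#> R) dvd card P * card R" by (metis dvd_triv_left)
      have cp: "coprime p q" using primes_coprime[OF p q1] False by auto
      have cr: "coprime r q" using primes_coprime[OF r(1) q1 r(2)] .
      have c: "coprime (card P * card R) q"
        using P(2) R(2) cp cr by simp
      have "coprime (card (P <#> R)) q" by (rule coprime_divisors[OF d dvd_refl c])
      then have "P <#> R \<subseteq> K" using absorb n by blast
      moreover have "R \<subseteq> P <#> R" by (rule sub2[OF subgroup.subset[OF R(1)] subgroup.one_closed[OF P(1)]])
      ultimately have "card R dvd card K" using card_subgroup_dvd[OF R(1) Ksub] by blast
      then show ?thesis using R(2) by simp
    qed
    have lag: "card (rcosets K) * card K = order G" by (rule lagrange[OF Ksub])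
    have m0: "card (rcosets K) > 0" using lag pos by (cases "card (rcosets K) = 0") auto
    have only: "r = q" if rr: "Factorial_Ring.prime r" "r dvd card (rcosets K)" for r
    proof (rule ccontr)
      assume "r \<noteq> q"
      let ?a = "multiplicity r (order G)"
      have "r ^ ?a dvd card K" using Rdvd rr(1) \<open>r \<noteq> q\<close> by blast
      then have "r ^ ?a * r dvd card K * card (rcosets K)" using rr(2) by (rule mult_dvd_mono)
      then have "r ^ Suc ?a dvd order G" using lag by (simp add: mult.commute)
      then have "Suc ?a \<le> ?a"
        using multiplicity_geI[of "order G" r "Suc ?a"] pos prime_gt_1_nat[OF rr(1)] by simp
      then show False by simp
    qed
    have "card (rcosets K) = q ^ multiplicity q (card (rcosets K))"
      by (rule prime_power_only[OF m0 q1 only])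
    then have "card (carrier G) = card K * q ^ multiplicity q (card (rcosets K))"
      using lag unfolding order_def by (metis mult.commute)
    then have "q_nilpotent q G" unfolding q_nilpotent_def using Kn Kc by blast
    then show ?thesis ..
  qed
qed

end

theorem theorem1p10:
  fixes G :: "('a, 'b) monoid_scheme" and p :: nat
  assumes "group G" and "finite (carrier G)"
    and "Factorial_Ring.prime p" and "p dvd order G"
    and "\<And>M. maximal_subgroup M G \<Longrightarrow> M \<lhd> G \<or> \<not> p dvd card M"
  shows "\<forall>q. Factorial_Ring.prime q \<and> q dvd order G \<longrightarrow> q_nilpotent q G \<or> q_closed q G"
proof (intro allI impI)
  fix q :: nat assume h: "Factorial_Ring.prime q \<and> q dvd order G"
  from h have hq: "Factorial_Ring.prime q" by (rule conjunct1)
  show "q_nilpotent q G \<or> q_closed q G"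
    by (rule group.main_q[OF assms(1) assms(2) assms(3) assms(4) assms(5) hq])
qed

end
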